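(* Let $G=(I\cup C,E)$ be a split graph whose clique vertices are labelled $1,\dots,k$ so that conditions (i)–(iii) below hold, and let $w$ be the word constructed below. If $a,b\in I$ are distinct, then $a$ and $b$ do not alternate in $w$.
   Context: Words: a word over a finite set $X$ is a finite sequence of elements of $X$; for a word $u$ and $S\subseteq X$, $u|_S$ is the subsequence of $u$ consisting of all occurrences of letters of $S$; $u^R$ is the reversal of $u$. Two letters $x,y$ alternate in $u$ if $u|_{\{x,y\}}$ is of the form $xyxy\cdots$ or $yxyx\cdots$ (of even or odd length); otherwise they do not alternate. For integers $a\le b$, $[a,b]=\{a,a+1,\dots,b\}$. Setting: $G=(I\cup C,E)$ is a split graph: $C$ induces a clique, $I$ induces an independent set, and $C$ is inclusion-wise maximal, i.e. no vertex of $I$ is adjacent to all vertices of $C$. The vertices of $C$ are labelled by $1,\dots,k$ where $k=|C|$, and for all $a,b\in I$: (i) either $N(a)=[1,m]\cup[n,k]$ for some $m<n$, or $N(a)=[l,r]$ for some $l\le r$; (ii) if $N(a)=[1,m]\cup[n,k]$ ($m<n$) and $N(b)=[l,r]$ ($l\le r$), then $l>m$ or $r<n$; (iii) if $N(a)=[1,m]\cup[n,k]$ and $N(b)=[1,m']\cup[n',k]$ ($m<n$, $m'<n'$), then $m'<n$ and $m<n'$. Let $B$ be the set of $a\in I$ whose neighbourhood is an integer interval $[l_a,r_a]$, and $A=I\setminus B$; for $a\in A$ write $N(a)=[1,m_a]\cup[n_a,k]$ with $m_a<n_a$. Construction of $w$: start with $p_1=p_2=p_3=12\cdots k$. Process the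 vertices of $I$ one at a time in an arbitrary fixed order; "replace $y$ in $p$ by $yx$" (resp. $xy$) means replacing the unique occurrence of the letter $y$ in $p$ by the two letters $yx$ (resp. $xy$). For $a\in A$: replace $m_a$ in $p_1$ by $m_a a$, and replace $n_a$ in $p_2$ by $a n_a$. For $a\in B$: replace $l_a$ in $p_1$ by $a l_a$, and replace $r_a$ in $p_2$ by $r_a a$. After all vertices of $I$ are processed, let $d=\max(\{1\}\cup\{m_a: a\in A\})$ and replace the letter $d$ in $p_3$ by the word $d\,(p_1|_A)^R$. Finally set $w=p_1\,(p_1|_B)^R\,p_2\,p_3$ (a $3$-uniform word over $V$). *)

theory Defs
  imports Main
begin

text \<open>Letters of the word: clique vertex j is Inl j (1 <= j <= k),
  independent vertex a is Inr a.\<close>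

definition subword :: "'b set \<Rightarrow> 'b list \<Rightarrow> 'b list" where
  "subword S u = filter (\<lambda>z. z \<in> S) u"

definition alternate :: "'b list \<Rightarrow> 'b \<Rightarrow> 'b \<Rightarrow> bool" where
  "alternate u x y \<longleftrightarrow>
     (\<exists>n. subword {x, y} u = map (\<lambda>i. if even i then x else y) [0..<n]
        \<or> subword {x, y} u = map (\<lambda>i. if even i then y else x) [0..<n])"

definition interval_nb :: "nat \<Rightarrow> nat set \<Rightarrow> bool" where
  "interval_nb k S \<longleftrightarrow> (\<exists>l r. 1 \<le> l \<and> l \<le> r \<and> r \<le> k \<and> S = {l..r})"

definition cyclic_nb :: "nat \<Rightarrow> nat set \<Rightarrow> bool" where
  "cyclic_nb k S \<longleftrightarrow> (\<exists>m n. 1 \<le> m \<and> m < n \<and> n \<le> k \<and> S = {1..m} \<union> {n..k})"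

definition nb_l :: "nat set \<Rightarrow> nat" where
  "nb_l S = (THE l. \<exists>r. l \<le> r \<and> S = {l..r})"

definition nb_r :: "nat set \<Rightarrow> nat" where
  "nb_r S = (THE r. \<exists>l. l \<le> r \<and> S = {l..r})"

definition nb_m :: "nat \<Rightarrow> nat set \<Rightarrow> nat" where
  "nb_m k S = (THE m. \<exists>n. 1 \<le> m \<and> m < n \<and> n \<le> k \<and> S = {1..m} \<union> {n..k})"

definition nb_n :: "nat \<Rightarrow> nat set \<Rightarrow> nat" where
  "nb_n k S = (THE n. \<exists>m. 1 \<le> m \<and> m < n \<and> n \<le> k \<and> S = {1..m} \<union> {n..k})"

definition repl_after :: "'b \<Rightarrow> 'b \<Rightarrow> 'b list \<Rightarrow> 'b list" where
  "repl_after y x p = concat (map (\<lambda>z. if z = y then [z, x] else [z]) p)"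

definition repl_before :: "'b \<Rightarrow> 'b \<Rightarrow> 'b list \<Rightarrow> 'b list" where
  "repl_before y x p = concat (map (\<lambda>z. if z = y then [x, z] else [z]) p)"

definition repl_word :: "'b \<Rightarrow> 'b list \<Rightarrow> 'b list \<Rightarrow> 'b list" where
  "repl_word y v p = concat (map (\<lambda>z. if z = y then v else [z]) p)"

definition step :: "nat \<Rightarrow> ('a \<Rightarrow> nat set) \<Rightarrow> 'a
     \<Rightarrow> (nat + 'a) list \<times> (nat + 'a) list \<Rightarrow> (nat + 'a) list \<times> (nat + 'a) list" where
  "step k N a pp = (case pp of (p1, p2) \<Rightarrow>
     if interval_nb k (N a)
     then (repl_before (Inl (nb_l (N a))) (Inr a) p1, repl_after (Inl (nb_r (N a))) (Inr a) p2)
     else (repl_after (Inl (nb_m k (N a))) (Inr a) p1, repl_before (Inl (nb_n k (N a))) (Inr a) p2))"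

text \<open>The word w; the list Is is the fixed processing order of the vertices of I.\<close>
definition construct_w :: "nat \<Rightarrow> ('a \<Rightarrow> nat set) \<Rightarrow> 'a list \<Rightarrow> (nat + 'a) list" where
  "construct_w k N Is =
    (let p0 = map Inl [1..<Suc k];
         pp = fold (step k N) Is (p0, p0);
         p1 = fst pp; p2 = snd pp;
         Aset = {a \<in> set Is. \<not> interval_nb k (N a)};
         Bset = {a \<in> set Is. interval_nb k (N a)};
         d = Max ({1} \<union> (\<lambda>a. nb_m k (N a)) ` Aset);
         p3 = repl_word (Inl d) (Inl d # rev (subword (Inr ` Aset) p1)) p0
     in p1 @ rev (subword (Inr ` Bset) p1) @ p2 @ p3)"

end

theory Submission
  imports Defs
begin


lemma repl_before_Nil[simp]: "repl_before y x [] = []" by (simp add: repl_before_def)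
lemma repl_before_Cons[simp]:
  "repl_before y x (z#p) = (if z = y then [x,z] else [z]) @ repl_before y x p"
  by (simp add: repl_before_def)
lemma repl_after_Nil[simp]: "repl_after y x [] = []" by (simp add: repl_after_def)
lemma repl_after_Cons[simp]:
  "repl_after y x (z#p) = (if z = y then [z,x] else [z]) @ repl_after y x p"
  by (simp add: repl_after_def)
lemma repl_word_Nil[simp]: "repl_word y v [] = []" by (simp add: repl_word_def)
lemma repl_word_Cons[simp]:
  "repl_word y v (z#p) = (if z = y then v else [z]) @ repl_word y v p"
  by (simp add: repl_word_def)

lemma repl_before_notin: "y \<notin> set p \<Longrightarrow> repl_before y x p = p" by (induct p) auto
lemma repl_after_notin: "y \<notin> set p \<Longrightarrow> repl_after y x p = p" by (induct p) auto

lemma set_repl_before: "set (repl_before y x p) = set p \<union> (if y \<in> set p then {x} else {})"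
  by (induct p) auto
lemma set_repl_after: "set (repl_after y x p) = set p \<union> (if y \<in> set p then {x} else {})"
  by (induct p) auto

lemma distinct_repl_before: "distinct p \<Longrightarrow> x \<notin> set p \<Longrightarrow> distinct (repl_before y x p)"
  by (induct p) (auto simp: repl_before_notin set_repl_before)
lemma distinct_repl_after: "distinct p \<Longrightarrow> x \<notin> set p \<Longrightarrow> distinct (repl_after y x p)"
  by (induct p) (auto simp: repl_after_notin set_repl_after)

lemma sorted_repl_before:
  assumes "sorted (map key p)" "distinct p" "Suc (key x) = key y" "\<And>z. z \<noteq> y \<Longrightarrow> key z \<noteq> key y"
  shows "sorted (map key (repl_before y x p))"
  using assms(1,2)
proof (induct p)
  case Nil then show ?case by simp
next
  case (Cons z p)
  show ?case
  proof (cases "z = y")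
    case True
    then have "y \<notin> set p" using Cons by simp
    then have "repl_before y x p = p" by (rule repl_before_notin)
    with True Cons.prems assms(3) show ?thesis by auto
  next
    case False
    have IH: "sorted (map key (repl_before y x p))" using Cons by simp
    have "\<forall>w\<in>set (repl_before y x p). key z \<le> key w"
    proof
      fix w assume "w \<in> set (repl_before y x p)"
      then have "w \<in> set p \<or> (w = x \<and> y \<in> set p)" by (auto simp: set_repl_before split: if_splits)
      then show "key z \<le> key w"
      proof
        assume "w \<in> set p" then show ?thesis using Cons.prems by simp
      next
        assume wx: "w = x \<and> y \<in> set p"
        then have "key z \<le> key y" using Cons.prems by simp
        moreover have "key z \<noteq> key y" using assms(4) False by blast
        ultimately show ?thesis using wx assms(3) by simp
      qed
    qed
    then show ?thesis using False IH by simp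
  qed
qed

lemma sorted_repl_after:
  assumes "sorted (map key p)" "distinct p" "key x = Suc (key y)" "\<And>z. z \<noteq> y \<Longrightarrow> key z \<noteq> key y"
  shows "sorted (map key (repl_after y x p))"
  using assms(1,2)
proof (induct p)
  case Nil then show ?case by simp
next
  case (Cons z p)
  show ?case
  proof (cases "z = y")
    case True
    then have "y \<notin> set p" using Cons by simp
    then have rp: "repl_after y x p = p" by (rule repl_after_notin)
    have "\<forall>w\<in>set p. key x \<le> key w"
    proof
      fix w assume w: "w \<in> set p"
      then have "key y \<le> key w" using Cons.prems True by simp
      moreover have "w \<noteq> y" using w \<open>y \<notin> set p\<close> by blast
      then have "key w \<noteq> key y" using assms(4) by blast
      ultimately show "key x \<le> key w" using assms(3) by simp
    qed
    with True rp Cons.prems assms(3) show ?thesis by auto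
  next
    case False
    have IH: "sorted (map key (repl_after y x p))" using Cons by simp
    have "\<forall>w\<in>set (repl_after y x p). key z \<le> key w"
    proof
      fix w assume "w \<in> set (repl_after y x p)"
      then have "w \<in> set p \<or> (w = x \<and> y \<in> set p)" by (auto simp: set_repl_after split: if_splits)
      then show "key z \<le> key w"
      proof
        assume "w \<in> set p" then show ?thesis using Cons.prems by simp
      next
        assume wx: "w = x \<and> y \<in> set p"
        then have "key z \<le> key y" using Cons.prems by simp
        then show ?thesis using wx assms(3) by simp
      qed
    qed
    then show ?thesis using False IH by simp
  qed
qed

lemma filter_single:
  "distinct p \<Longrightarrow> v \<in> set p \<Longrightarrow> \<forall>z\<in>set p. P z \<longleftrightarrow> z = v \<Longrightarrow> filter P p = [v]"
proof (induct p)
  case Nil then show ?case by simp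
next
  case (Cons z p)
  show ?case
  proof (cases "z = v")
    case True
    then have "\<forall>w\<in>set p. \<not> P w" using Cons.prems by auto
    then show ?thesis using True Cons.prems by simp
  next
    case False
    then show ?thesis using Cons by auto
  qed
qed

lemma filter_two_any:
  "distinct p \<Longrightarrow> u \<noteq> v \<Longrightarrow> u \<in> set p \<Longrightarrow> v \<in> set p \<Longrightarrow>
   filter (\<lambda>z. z \<in> {u,v}) p = [u,v] \<or> filter (\<lambda>z. z \<in> {u,v}) p = [v,u]"
proof (induct p)
  case Nil then show ?case by simp
next
  case (Cons z p)
  show ?case
  proof (cases "z = u \<or> z = v")
    case True
    then show ?thesis
    proof
      assume zu: "z = u"
      have "filter (\<lambda>z. z \<in> {u,v}) p = [v]"
        by (rule filter_single) (use Cons.prems zu in auto)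
      then show ?thesis using zu by simp
    next
      assume zv: "z = v"
      have "filter (\<lambda>z. z \<in> {u,v}) p = [u]"
        by (rule filter_single) (use Cons.prems zv in auto)
      then show ?thesis using zv by simp
    qed
  next
    case False
    then show ?thesis using Cons by auto
  qed
qed

lemma filter_two_sorted:
  "sorted (map key p) \<Longrightarrow> distinct p \<Longrightarrow> u \<in> set p \<Longrightarrow> v \<in> set p \<Longrightarrow> key u < key v \<Longrightarrow>
   filter (\<lambda>z. z \<in> {u,v}) p = [u,v]"
proof (induct p)
  case Nil then show ?case by simp
next
  case (Cons z p)
  show ?case
  proof (cases "z = u")
    case True
    have "filter (\<lambda>z. z \<in> {u,v}) p = [v]"
      by (rule filter_single) (use Cons.prems True in auto)
    then show ?thesis using True by simp
  next
    case False
    have "z \<noteq> v"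
    proof
      assume "z = v"
      then have "key v \<le> key u" using Cons.prems False by auto
      then show False using Cons.prems by simp
    qed
    then show ?thesis using Cons False by auto
  qed
qed

lemma filter_repl_word:
  "\<forall>z\<in>set p. \<not> P z \<Longrightarrow> distinct p \<Longrightarrow>
   filter P (repl_word y v p) = (if y \<in> set p then filter P v else [])"
  by (induct p) auto

lemma alt_noadj:
  assumes "x \<noteq> y" "map (\<lambda>i. if even i then x else y) [0..<n] = pre @ [z,z] @ suf"
  shows False
proof -
  let ?i = "length pre"
  have ln: "n = length pre + 2 + length suf" using arg_cong[OF assms(2), of length] by simp
  have lt: "?i < n" "Suc ?i < n" using ln by simp_all
  have A: "(pre @ [z,z] @ suf) ! ?i = z" by (simp add: nth_append)
  have B: "(pre @ [z,z] @ suf) ! Suc ?i = z" by (simp add: nth_append)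
  have "map (\<lambda>i. if even i then x else y) [0..<n] ! ?i = z" using A assms(2) by simp
  hence 1: "(if even ?i then x else y) = z" using lt(1) by simp
  have "map (\<lambda>i. if even i then x else y) [0..<n] ! Suc ?i = z" using B assms(2) by simp
  hence 2: "(if even (Suc ?i) then x else y) = z" using lt by simp
  from 1 2 assms(1) show False by (auto split: if_splits)
qed

lemma not_alt:
  assumes "x \<noteq> y" "subword {x,y} u = pre @ [z,z] @ suf"
  shows "\<not> alternate u x y"
  unfolding alternate_def
  using alt_noadj[OF assms(1)] alt_noadj[OF assms(1)[symmetric]] assms(2) by metis



lemma ivl_unique:
  assumes "(l::nat) \<le> r" "l' \<le> r'" "{l..r} = {l'..r'}"
  shows "l' = l \<and> r' = r"
proof -
  have H: "\<forall>i. (l \<le> i \<and> i \<le> r) = (l' \<le> i \<and> i \<le> r')" using assms(3) by (simp add: set_eq_iff)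
  from H[rule_format, of l] H[rule_format, of r] H[rule_format, of l'] H[rule_format, of r'] assms(1,2)
  show ?thesis by auto
qed

lemma cyc_unique:
  assumes "1 \<le> (m::nat)" "Suc m < n" "n \<le> k" "1 \<le> m'" "m' < n'" "n' \<le> k"
    "{1..m} \<union> {n..k} = {1..m'} \<union> {n'..k}"
  shows "m' = m \<and> n' = n"
proof -
  have H: "\<forall>i. (1 \<le> i \<and> i \<le> m \<or> n \<le> i \<and> i \<le> k) = (1 \<le> i \<and> i \<le> m' \<or> n' \<le> i \<and> i \<le> k)"
    using assms(7) by (simp add: set_eq_iff)
  have mm: "m' = m"
    using H[rule_format, of "Suc m"] H[rule_format, of m] assms by auto
  have "n' = n"
    using H[rule_format, of n] H[rule_format, of n'] assms mm by auto
  with mm show ?thesis by simp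
qed

lemma interval_rep:
  assumes "interval_nb k S"
  shows "1 \<le> nb_l S \<and> nb_l S \<le> nb_r S \<and> nb_r S \<le> k \<and> S = {nb_l S..nb_r S}"
proof -
  obtain l r where lr: "1 \<le> l" "l \<le> r" "r \<le> k" "S = {l..r}" using assms unfolding interval_nb_def by blast
  have "nb_l S = l" unfolding nb_l_def
  proof (rule the_equality)
    show "\<exists>r'. l \<le> r' \<and> S = {l..r'}" using lr by blast
  next
    fix l' assume "\<exists>r'. l' \<le> r' \<and> S = {l'..r'}"
    then show "l' = l" using ivl_unique[of l r] lr by metis
  qed
  moreover have "nb_r S = r" unfolding nb_r_def
  proof (rule the_equality)
    show "\<exists>l'. l' \<le> r \<and> S = {l'..r}" using lr by blast
  next
    fix r' assume "\<exists>l'. l' \<le> r' \<and> S = {l'..r'}"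
    then show "r' = r" using ivl_unique[of l r] lr by metis
  qed
  ultimately show ?thesis using lr by simp
qed

lemma cyclic_rep:
  assumes "cyclic_nb k S" "S \<noteq> {1..k}"
  shows "1 \<le> nb_m k S \<and> nb_m k S < nb_n k S \<and> nb_n k S \<le> k \<and> S = {1..nb_m k S} \<union> {nb_n k S..k}"
proof -
  obtain m n where mn: "1 \<le> m" "m < n" "n \<le> k" "S = {1..m} \<union> {n..k}"
    using assms(1) unfolding cyclic_nb_def by blast
  have gap: "Suc m < n"
  proof (rule ccontr)
    assume "\<not> Suc m < n"
    then have "n = Suc m" using mn by simp
    then have "S = {1..k}" using mn by auto
    then show False using assms(2) by simp
  qed
  have "nb_m k S = m" unfolding nb_m_def
  proof (rule the_equality)
    show "\<exists>n'. 1 \<le> m \<and> m < n' \<and> n' \<le> k \<and> S = {1..m} \<union> {n'..k}" using mn by blast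
  next
    fix m' assume "\<exists>n'. 1 \<le> m' \<and> m' < n' \<and> n' \<le> k \<and> S = {1..m'} \<union> {n'..k}"
    then show "m' = m" using cyc_unique[of m n k] mn gap by metis
  qed
  moreover have "nb_n k S = n" unfolding nb_n_def
  proof (rule the_equality)
    show "\<exists>m'. 1 \<le> m' \<and> m' < n \<and> n \<le> k \<and> S = {1..m'} \<union> {n..k}" using mn by blast
  next
    fix n' assume "\<exists>m'. 1 \<le> m' \<and> m' < n' \<and> n' \<le> k \<and> S = {1..m'} \<union> {n'..k}"
    then show "n' = n" using cyc_unique[of m n k] mn gap by metis
  qed
  ultimately show ?thesis using mn by simp
qed

definition key1 :: "nat \<Rightarrow> ('a \<Rightarrow> nat set) \<Rightarrow> nat + 'a \<Rightarrow> nat" where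
  "key1 k N z = (case z of Inl j \<Rightarrow> 4*j+2 | Inr x \<Rightarrow>
      if interval_nb k (N x) then 4 * nb_l (N x) + 1 else 4 * nb_m k (N x) + 3)"

definition key2 :: "nat \<Rightarrow> ('a \<Rightarrow> nat set) \<Rightarrow> nat + 'a \<Rightarrow> nat" where
  "key2 k N z = (case z of Inl j \<Rightarrow> 4*j+2 | Inr x \<Rightarrow>
      if interval_nb k (N x) then 4 * nb_r (N x) + 3 else 4 * nb_n k (N x) + 1)"

lemma key1_Inl: "z \<noteq> Inl j \<Longrightarrow> key1 k N z \<noteq> key1 k N (Inl j)"
  by (cases z) (auto simp: key1_def, presburger+)

lemma key2_Inl: "z \<noteq> Inl j \<Longrightarrow> key2 k N z \<noteq> key2 k N (Inl j)"
  by (cases z) (auto simp: key2_def, presburger+)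

definition good :: "nat \<Rightarrow> ('a \<Rightarrow> nat set) \<Rightarrow> 'a \<Rightarrow> bool" where
  "good k N x \<longleftrightarrow>
     (interval_nb k (N x) \<longrightarrow> 1 \<le> nb_l (N x) \<and> nb_l (N x) \<le> k \<and> 1 \<le> nb_r (N x) \<and> nb_r (N x) \<le> k) \<and>
     (\<not> interval_nb k (N x) \<longrightarrow> 1 \<le> nb_m k (N x) \<and> nb_m k (N x) \<le> k \<and> 1 \<le> nb_n k (N x) \<and> nb_n k (N x) \<le> k)"

definition inv_p :: "nat \<Rightarrow> 'a set \<Rightarrow> (nat + 'a) list \<Rightarrow> bool" where
  "inv_p k D p \<longleftrightarrow> distinct p \<and> set p = Inl ` {1..k} \<union> Inr ` D"

definition INV where
  "INV k N D pp \<longleftrightarrow> inv_p k D (fst pp) \<and> inv_p k D (snd pp) \<and>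
     sorted (map (key1 k N) (fst pp)) \<and> sorted (map (key2 k N) (snd pp))"

lemma step_inv:
  assumes "INV k N D pp" "x \<notin> D" "good k N x"
  shows "INV k N (insert x D) (step k N x pp)"
proof -
  obtain p1 p2 where pp: "pp = (p1, p2)" by (cases pp)
  have i1: "distinct p1" "set p1 = Inl ` {1..k} \<union> Inr ` D"
   and i2: "distinct p2" "set p2 = Inl ` {1..k} \<union> Inr ` D"
   and s1: "sorted (map (key1 k N) p1)" and s2: "sorted (map (key2 k N) p2)"
    using assms(1) pp by (auto simp: INV_def inv_p_def)
  have n1: "Inr x \<notin> set p1" and n2: "Inr x \<notin> set p2" using i1 i2 assms(2) by auto
  show ?thesis
  proof (cases "interval_nb k (N x)")
    case True
    let ?l = "nb_l (N x)" and ?r = "nb_r (N x)"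
    have b: "1 \<le> ?l" "?l \<le> k" "1 \<le> ?r" "?r \<le> k" using assms(3) True by (auto simp: good_def)
    have st: "step k N x pp = (repl_before (Inl ?l) (Inr x) p1, repl_after (Inl ?r) (Inr x) p2)"
      using True pp by (simp add: step_def)
    have m1: "Inl ?l \<in> set p1" using b i1 by auto
    have m2: "Inl ?r \<in> set p2" using b i2 by auto
    have "sorted (map (key1 k N) (repl_before (Inl ?l) (Inr x) p1))"
      apply (rule sorted_repl_before[OF s1 i1(1)])
       apply (simp add: key1_def True)
      apply (erule key1_Inl)
      done
    moreover have "sorted (map (key2 k N) (repl_after (Inl ?r) (Inr x) p2))"
      apply (rule sorted_repl_after[OF s2 i2(1)])
       apply (simp add: key2_def True)
      apply (erule key2_Inl)
      done
    ultimately show ?thesis using st i1 i2 n1 n2 m1 m2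
      by (auto simp: INV_def inv_p_def distinct_repl_before distinct_repl_after
                     set_repl_before set_repl_after)
  next
    case False
    let ?m = "nb_m k (N x)" and ?n = "nb_n k (N x)"
    have b: "1 \<le> ?m" "?m \<le> k" "1 \<le> ?n" "?n \<le> k" using assms(3) False by (auto simp: good_def)
    have st: "step k N x pp = (repl_after (Inl ?m) (Inr x) p1, repl_before (Inl ?n) (Inr x) p2)"
      using False pp by (simp add: step_def)
    have m1: "Inl ?m \<in> set p1" using b i1 by auto
    have m2: "Inl ?n \<in> set p2" using b i2 by auto
    have "sorted (map (key1 k N) (repl_after (Inl ?m) (Inr x) p1))"
      apply (rule sorted_repl_after[OF s1 i1(1)])
       apply (simp add: key1_def False)
      apply (erule key1_Inl)
      done
    moreover have "sorted (map (key2 k N) (repl_before (Inl ?n) (Inr x) p2))"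
      apply (rule sorted_repl_before[OF s2 i2(1)])
       apply (simp add: key2_def False)
      apply (erule key2_Inl)
      done
    ultimately show ?thesis using st i1 i2 n1 n2 m1 m2
      by (auto simp: INV_def inv_p_def distinct_repl_before distinct_repl_after
                     set_repl_before set_repl_after)
  qed
qed

lemma fold_inv:
  "distinct xs \<Longrightarrow> set xs \<inter> D = {} \<Longrightarrow> \<forall>x\<in>set xs. good k N x \<Longrightarrow> INV k N D pp \<Longrightarrow>
   INV k N (D \<union> set xs) (fold (step k N) xs pp)"
proof (induct xs arbitrary: D pp)
  case Nil then show ?case by simp
next
  case (Cons x xs)
  have I1: "INV k N (insert x D) (step k N x pp)"
    by (rule step_inv) (use Cons.prems in auto)
  have I2: "set xs \<inter> insert x D = {}" using Cons.prems by auto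
  have "INV k N (insert x D \<union> set xs) (fold (step k N) xs (step k N x pp))"
    by (rule Cons.hyps) (use Cons.prems I1 I2 in auto)
  then show ?case by simp
qed



theorem lemma3:
  fixes k :: nat and N :: "'a \<Rightarrow> nat set" and Is :: "'a list" and a b :: 'a
  assumes dist: "distinct Is"
    and nbC: "\<forall>x\<in>set Is. N x \<subseteq> {1..k}"
    and maximal: "\<forall>x\<in>set Is. N x \<noteq> {1..k}"
    and cond_i: "\<forall>x\<in>set Is. cyclic_nb k (N x) \<or> interval_nb k (N x)"
    and cond_ii: "\<forall>x\<in>set Is. \<forall>y\<in>set Is. \<forall>m n l r.
        1 \<le> m \<and> m < n \<and> n \<le> k \<and> N x = {1..m} \<union> {n..k} \<and> l \<le> r \<and> N y = {l..r}
        \<longrightarrow> l > m \<or> r < n"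
    and cond_iii: "\<forall>x\<in>set Is. \<forall>y\<in>set Is. \<forall>m n m' n'.
        1 \<le> m \<and> m < n \<and> n \<le> k \<and> N x = {1..m} \<union> {n..k} \<and>
        1 \<le> m' \<and> m' < n' \<and> n' \<le> k \<and> N y = {1..m'} \<union> {n'..k}
        \<longrightarrow> m' < n \<and> m < n'"
    and ab: "a \<in> set Is" "b \<in> set Is" "a \<noteq> b"
  shows "\<not> alternate (construct_w k N Is) (Inr a) (Inr b)"
proof -
  define p0 :: "(nat + 'a) list" where "p0 = map Inl [1..<Suc k]"
  define pp where "pp = fold (step k N) Is (p0, p0)"
  define p1 where "p1 = fst pp"
  define p2 where "p2 = snd pp"
  define Aset where "Aset = {a \<in> set Is. \<not> interval_nb k (N a)}"
  define Bset where "Bset = {a \<in> set Is. interval_nb k (N a)}"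
  define d where "d = Max ({1} \<union> (\<lambda>a. nb_m k (N a)) ` Aset)"
  define p3 where "p3 = repl_word (Inl d) (Inl d # rev (subword (Inr ` Aset) p1)) p0"
  have w: "construct_w k N Is = p1 @ rev (subword (Inr ` Bset) p1) @ p2 @ p3"
    unfolding construct_w_def p0_def pp_def p1_def p2_def Aset_def Bset_def d_def p3_def Let_def
    by simp
  have cyc: "cyclic_nb k (N x)" if "x \<in> set Is" "\<not> interval_nb k (N x)" for x
    using cond_i that by blast
  have cycrep: "1 \<le> nb_m k (N x) \<and> nb_m k (N x) < nb_n k (N x) \<and> nb_n k (N x) \<le> k \<and>
      N x = {1..nb_m k (N x)} \<union> {nb_n k (N x)..k}" if "x \<in> set Is" "\<not> interval_nb k (N x)" for x
    using cyclic_rep[OF cyc[OF that]] maximal that by blast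
  have ivrep: "1 \<le> nb_l (N x) \<and> nb_l (N x) \<le> nb_r (N x) \<and> nb_r (N x) \<le> k \<and>
      N x = {nb_l (N x)..nb_r (N x)}" if "interval_nb k (N x)" for x
    using interval_rep[OF that] .
  have good: "\<forall>x\<in>set Is. good k N x"
  proof
    fix x assume x: "x \<in> set Is"
    show "good k N x"
    proof (cases "interval_nb k (N x)")
      case True then show ?thesis using ivrep[OF True] by (auto simp: good_def)
    next
      case False then show ?thesis using cycrep[OF x False] by (auto simp: good_def)
    qed
  qed
  have k1: "1 \<le> k" using good ab(1) by (auto simp: good_def split: if_splits)
  have setp0: "set p0 = Inl ` {1..k}" unfolding p0_def by auto
  have I0: "INV k N {} (p0, p0)"
  proof -
    have "sorted (map (key1 k N) p0)" unfolding p0_def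
      by (simp add: key1_def sorted_map del: upt_Suc)
    moreover have "sorted (map (key2 k N) p0)" unfolding p0_def
      by (simp add: key2_def sorted_map del: upt_Suc)
    moreover have "distinct p0" unfolding p0_def by (simp add: distinct_map)
    ultimately show ?thesis using setp0 by (simp add: INV_def inv_p_def)
  qed
  have IF: "INV k N ({} \<union> set Is) pp" unfolding pp_def
    by (rule fold_inv) (use dist good I0 in auto)
  have p1d: "distinct p1" and p1s: "set p1 = Inl ` {1..k} \<union> Inr ` set Is"
    and p2d: "distinct p2" and p2s: "set p2 = Inl ` {1..k} \<union> Inr ` set Is"
    and p1o: "sorted (map (key1 k N) p1)" and p2o: "sorted (map (key2 k N) p2)"
    using IF by (auto simp: INV_def inv_p_def p1_def p2_def)
  let ?P = "\<lambda>z. z \<in> {Inr a, Inr b}"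
  define f1 where "f1 = filter ?P p1"
  define f3 where "f3 = filter ?P p2"
  have neq: "(Inr a :: nat + 'a) \<noteq> Inr b" using ab by simp
  have f1: "f1 = [Inr a, Inr b] \<or> f1 = [Inr b, Inr a]" unfolding f1_def
    by (rule filter_two_any) (use p1d p1s ab neq in auto)
  have f3: "f3 = [Inr a, Inr b] \<or> f3 = [Inr b, Inr a]" unfolding f3_def
    by (rule filter_two_any) (use p2d p2s ab neq in auto)
  have dk: "Inl d \<in> set p0"
  proof -
    have fin: "finite ({1} \<union> (\<lambda>a. nb_m k (N a)) ` Aset)" unfolding Aset_def by simp
    have "d \<in> {1} \<union> (\<lambda>a. nb_m k (N a)) ` Aset" unfolding d_def by (rule Max_in[OF fin]) simp
    then have "d \<le> k" using k1 by (auto simp: Aset_def dest: cycrep)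
    moreover have "1 \<le> d" unfolding d_def by (rule Max_ge[OF fin]) simp
    ultimately show ?thesis using setp0 by simp
  qed
  have f4: "filter ?P p3 = rev (filter (\<lambda>z. z \<in> Inr ` Aset \<and> ?P z) p1)"
  proof -
    have "filter ?P p3 = filter ?P (Inl d # rev (subword (Inr ` Aset) p1))"
      unfolding p3_def
      by (subst filter_repl_word) (use setp0 dk in \<open>auto simp: p0_def distinct_map\<close>)
    then show ?thesis by (simp add: subword_def rev_filter)
  qed
  have f2: "filter ?P (rev (subword (Inr ` Bset) p1)) = rev (filter (\<lambda>z. z \<in> Inr ` Bset \<and> ?P z) p1)"
    by (simp add: subword_def rev_filter)
  have W: "subword {Inr a, Inr b} (construct_w k N Is) =
     f1 @ rev (filter (\<lambda>z. z \<in> Inr ` Bset \<and> ?P z) p1) @ f3 @ rev (filter (\<lambda>z. z \<in> Inr ` Aset \<and> ?P z) p1)"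
    unfolding w subword_def f1_def f3_def using f2 f4 by (simp add: subword_def)
  show ?thesis
  proof (cases "interval_nb k (N a)"; cases "interval_nb k (N b)")
    assume ia: "interval_nb k (N a)" and ib: "interval_nb k (N b)"
    have e1: "filter (\<lambda>z. z \<in> Inr ` Bset \<and> ?P z) p1 = f1" unfolding f1_def
      by (rule filter_cong) (use ia ib ab in \<open>auto simp: Bset_def\<close>)
    have e2: "filter (\<lambda>z. z \<in> Inr ` Aset \<and> ?P z) p1 = []"
      using ia ib ab by (auto simp: Aset_def filter_empty_conv)
    have "subword {Inr a, Inr b} (construct_w k N Is) = f1 @ rev f1 @ f3"
      using W unfolding e1 e2 by simp
    then show ?thesis using f1
    proof (elim disjE)
      assume "subword {Inr a, Inr b} (construct_w k N Is) = f1 @ rev f1 @ f3" "f1 = [Inr a, Inr b]"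
      then show ?thesis by (intro not_alt[OF neq, where pre="[Inr a]" and z="Inr b" and suf="Inr a # f3"]) simp
    next
      assume "subword {Inr a, Inr b} (construct_w k N Is) = f1 @ rev f1 @ f3" "f1 = [Inr b, Inr a]"
      then show ?thesis by (intro not_alt[OF neq, where pre="[Inr b]" and z="Inr a" and suf="Inr b # f3"]) simp
    qed
  next
    assume ia: "\<not> interval_nb k (N a)" and ib: "\<not> interval_nb k (N b)"
    have e1: "filter (\<lambda>z. z \<in> Inr ` Aset \<and> ?P z) p1 = f1" unfolding f1_def
      by (rule filter_cong) (use ia ib ab in \<open>auto simp: Aset_def\<close>)
    have e2: "filter (\<lambda>z. z \<in> Inr ` Bset \<and> ?P z) p1 = []"
      using ia ib ab by (auto simp: Bset_def filter_empty_conv)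
    have S: "subword {Inr a, Inr b} (construct_w k N Is) = f1 @ f3 @ rev f1"
      using W unfolding e1 e2 by simp
    show ?thesis using f1 f3
    proof (elim disjE)
      assume "f1 = [Inr a, Inr b]" "f3 = [Inr a, Inr b]"
      then show ?thesis using S by (intro not_alt[OF neq, where pre="[Inr a, Inr b, Inr a]" and z="Inr b" and suf="[Inr a]"]) simp
    next
      assume "f1 = [Inr a, Inr b]" "f3 = [Inr b, Inr a]"
      then show ?thesis using S by (intro not_alt[OF neq, where pre="[Inr a]" and z="Inr b" and suf="[Inr a, Inr b, Inr a]"]) simp
    next
      assume "f1 = [Inr b, Inr a]" "f3 = [Inr a, Inr b]"
      then show ?thesis using S by (intro not_alt[OF neq, where pre="[Inr b]" and z="Inr a" and suf="[Inr b, Inr a, Inr b]"]) simp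
    next
      assume "f1 = [Inr b, Inr a]" "f3 = [Inr b, Inr a]"
      then show ?thesis using S by (intro not_alt[OF neq, where pre="[Inr b, Inr a, Inr b]" and z="Inr a" and suf="[Inr b]"]) simp
    qed
  next
    assume ia: "interval_nb k (N a)" and ib: "\<not> interval_nb k (N b)"
    have "filter (\<lambda>z. z \<in> Inr ` Bset \<and> ?P z) p1 = [Inr a]"
      by (rule filter_single) (use p1d p1s ab ia ib in \<open>auto simp: Bset_def\<close>)
    moreover have "filter (\<lambda>z. z \<in> Inr ` Aset \<and> ?P z) p1 = [Inr b]"
      by (rule filter_single) (use p1d p1s ab ia ib in \<open>auto simp: Aset_def\<close>)
    ultimately have S: "subword {Inr a, Inr b} (construct_w k N Is) = f1 @ [Inr a] @ f3 @ [Inr b]"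
      using W by simp
    have ra: "1 \<le> nb_l (N a) \<and> nb_l (N a) \<le> nb_r (N a) \<and> nb_r (N a) \<le> k \<and> N a = {nb_l (N a)..nb_r (N a)}"
      using ivrep[OF ia] .
    have rb: "1 \<le> nb_m k (N b) \<and> nb_m k (N b) < nb_n k (N b) \<and> nb_n k (N b) \<le> k \<and>
      N b = {1..nb_m k (N b)} \<union> {nb_n k (N b)..k}" using cycrep[OF ab(2) ib] .
    have "nb_l (N a) > nb_m k (N b) \<or> nb_r (N a) < nb_n k (N b)"
      using cond_ii ab ra rb by blast
    then show ?thesis
    proof
      assume lt: "nb_l (N a) > nb_m k (N b)"
      have "f1 = [Inr b, Inr a]" unfolding f1_def
        using filter_two_sorted[OF p1o p1d, of "Inr b" "Inr a"] p1s ab lt ia ib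
        by (auto simp: key1_def insert_commute)
      then show ?thesis using S by (intro not_alt[OF neq, where pre="[Inr b]" and z="Inr a" and suf="f3 @ [Inr b]"]) simp
    next
      assume lt: "nb_r (N a) < nb_n k (N b)"
      have "f3 = [Inr a, Inr b]" unfolding f3_def
        using filter_two_sorted[OF p2o p2d, of "Inr a" "Inr b"] p2s ab lt ia ib
        by (auto simp: key2_def)
      then show ?thesis using S by (intro not_alt[OF neq, where pre="f1" and z="Inr a" and suf="[Inr b, Inr b]"]) simp
    qed
  next
    assume ia: "\<not> interval_nb k (N a)" and ib: "interval_nb k (N b)"
    have "filter (\<lambda>z. z \<in> Inr ` Bset \<and> ?P z) p1 = [Inr b]"
      by (rule filter_single) (use p1d p1s ab ia ib in \<open>auto simp: Bset_def\<close>)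
    moreover have "filter (\<lambda>z. z \<in> Inr ` Aset \<and> ?P z) p1 = [Inr a]"
      by (rule filter_single) (use p1d p1s ab ia ib in \<open>auto simp: Aset_def\<close>)
    ultimately have S: "subword {Inr a, Inr b} (construct_w k N Is) = f1 @ [Inr b] @ f3 @ [Inr a]"
      using W by simp
    have rb: "1 \<le> nb_l (N b) \<and> nb_l (N b) \<le> nb_r (N b) \<and> nb_r (N b) \<le> k \<and> N b = {nb_l (N b)..nb_r (N b)}"
      using ivrep[OF ib] .
    have ra: "1 \<le> nb_m k (N a) \<and> nb_m k (N a) < nb_n k (N a) \<and> nb_n k (N a) \<le> k \<and>
      N a = {1..nb_m k (N a)} \<union> {nb_n k (N a)..k}" using cycrep[OF ab(1) ia] .
    have "nb_l (N b) > nb_m k (N a) \<or> nb_r (N b) < nb_n k (N a)"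
      using cond_ii ab ra rb by blast
    then show ?thesis
    proof
      assume lt: "nb_l (N b) > nb_m k (N a)"
      have "f1 = [Inr a, Inr b]" unfolding f1_def
        using filter_two_sorted[OF p1o p1d, of "Inr a" "Inr b"] p1s ab lt ia ib
        by (auto simp: key1_def)
      then show ?thesis using S by (intro not_alt[OF neq, where pre="[Inr a]" and z="Inr b" and suf="f3 @ [Inr a]"]) simp
    next
      assume lt: "nb_r (N b) < nb_n k (N a)"
      have "f3 = [Inr b, Inr a]" unfolding f3_def
        using filter_two_sorted[OF p2o p2d, of "Inr b" "Inr a"] p2s ab lt ia ib
        by (auto simp: key2_def insert_commute)
      then show ?thesis using S by (intro not_alt[OF neq, where pre="f1" and z="Inr b" and suf="[Inr a, Inr a]"]) simp
    qed
  qed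
qed

end
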